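(* Let $\Gamma$ be a $(c,t)$-sparse graph and let $0<\gamma<1$. Suppose $\pi_1$ and $\pi_2$ are probability measures on $V(\Gamma)$ such that $\pi_i(v)<\gamma/t$ for all $v\in V(\Gamma)$ and $i\in\{1,2\}$. Let $\mathcal{S}=\{S_v: v\in\mathrm{supp}(\pi_2)\}$ be a family of subsets of $V(\Gamma)$, each of size $|S_v|\ge t$. Let $$D(\pi_2,\mathcal{S})=\{x\in V(\Gamma): \pi_2(\{y\in V(\Gamma): |S_y\setminus N_\Gamma(x)|<c|S_y|\})<\sqrt{\gamma}\}.$$ Then $\Pr_{x\sim\pi_1}[x\in D(\pi_2,\mathcal{S})]>1-\sqrt{\gamma}$.
   Context: A graph $\Gamma$ is $(c,t)$-sparse if for every pair of (not necessarily disjoint) vertex subsets $A,B\subseteq V(\Gamma)$ with $|A|,|B|\ge t$ we have $e(A,B)\le (1-c)|A||B|$, where $e(A,B)$ counts ordered pairs $(a,b)\in A\times B$ with $\{a,b\}\in E(\Gamma)$. *)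

theory Defs
  imports Complex_Main
begin

definition simple_graph :: "'a set \<Rightarrow> ('a \<Rightarrow> 'a \<Rightarrow> bool) \<Rightarrow> bool" where
  "simple_graph V E \<longleftrightarrow> finite V \<and> (\<forall>x\<in>V. \<forall>y\<in>V. E x y \<longrightarrow> E y x) \<and> (\<forall>x\<in>V. \<not> E x x)"

definition edges_between :: "('a \<Rightarrow> 'a \<Rightarrow> bool) \<Rightarrow> 'a set \<Rightarrow> 'a set \<Rightarrow> nat" where
  "edges_between E A B = card {(a, b) \<in> A \<times> B. E a b}"

definition sparse :: "'a set \<Rightarrow> ('a \<Rightarrow> 'a \<Rightarrow> bool) \<Rightarrow> real \<Rightarrow> real \<Rightarrow> bool" where
  "sparse V E c t \<longleftrightarrow>
     (\<forall>A B. A \<subseteq> V \<longrightarrow> B \<subseteq> V \<longrightarrow> real (card A) \<ge> t \<longrightarrow> real (card B) \<ge> t \<longrightarrow>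
        real (edges_between E A B) \<le> (1 - c) * real (card A) * real (card B))"

definition nbhd :: "'a set \<Rightarrow> ('a \<Rightarrow> 'a \<Rightarrow> bool) \<Rightarrow> 'a \<Rightarrow> 'a set" where
  "nbhd V E x = {y \<in> V. E x y}"

definition prob_dist :: "'a set \<Rightarrow> ('a \<Rightarrow> real) \<Rightarrow> bool" where
  "prob_dist V \<pi> \<longleftrightarrow> (\<forall>v\<in>V. \<pi> v \<ge> 0) \<and> sum \<pi> V = 1"

definition supp :: "'a set \<Rightarrow> ('a \<Rightarrow> real) \<Rightarrow> 'a set" where
  "supp V \<pi> = {v \<in> V. \<pi> v > 0}"

definition D_set :: "'a set \<Rightarrow> ('a \<Rightarrow> 'a \<Rightarrow> bool) \<Rightarrow> real \<Rightarrow> real \<Rightarrow> ('a \<Rightarrow> real) \<Rightarrow> ('a \<Rightarrow> 'a set) \<Rightarrow> 'a set" where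
  "D_set V E c \<gamma> \<pi>2 S =
     {x \<in> V. sum \<pi>2 {y \<in> V. real (card (S y - nbhd V E x)) < c * real (card (S y))} < sqrt \<gamma>}"

end

theory Submission
  imports Defs
begin

theorem lemma4p2:
  fixes V :: "'a set" and E :: "'a \<Rightarrow> 'a \<Rightarrow> bool"
    and c t \<gamma> :: real and \<pi>1 \<pi>2 :: "'a \<Rightarrow> real" and S :: "'a \<Rightarrow> 'a set"
  assumes "simple_graph V E"
    and "sparse V E c t"
    and "0 < \<gamma>" and "\<gamma> < 1"
    and "prob_dist V \<pi>1" and "prob_dist V \<pi>2"
    and "\<forall>v\<in>V. \<pi>1 v < \<gamma> / t" and "\<forall>v\<in>V. \<pi>2 v < \<gamma> / t"
    and "\<forall>v\<in>supp V \<pi>2. S v \<subseteq> V \<and> real (card (S v)) \<ge> t"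
  shows "sum \<pi>1 (D_set V E c \<gamma> \<pi>2 S) > 1 - sqrt \<gamma>"
proof (rule ccontr)
  assume neg: "\<not> ?thesis"
  have fin: "finite V" using assms(1) by (simp add: simple_graph_def)
  have p1: "\<forall>v\<in>V. \<pi>1 v \<ge> 0" "sum \<pi>1 V = 1" using assms(5) by (auto simp: prob_dist_def)
  have p2: "\<forall>v\<in>V. \<pi>2 v \<ge> 0" "sum \<pi>2 V = 1" using assms(6) by (auto simp: prob_dist_def)
  have "V \<noteq> {}" using p1 by auto
  then obtain v0 where "v0 \<in> V" by auto
  hence "0 < \<gamma> / t" using p1 assms(7) by fastforce
  hence tpos: "t > 0" using assms(3) by (simp add: zero_less_divide_iff)
  define Y where "Y x = {y\<in>V. real (card (S y - nbhd V E x)) < c * real (card (S y))}" for x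
  define D where "D = D_set V E c \<gamma> \<pi>2 S"
  have Ddef: "D = {x\<in>V. sum \<pi>2 (Y x) < sqrt \<gamma>}" unfolding D_def D_set_def Y_def by simp
  define B where "B = V - D"
  have DV: "D \<subseteq> V" using Ddef by auto
  have "sum \<pi>1 V = sum \<pi>1 B + sum \<pi>1 D" unfolding B_def
    using fin DV by (metis sum.subset_diff)
  hence PB: "sum \<pi>1 B \<ge> sqrt \<gamma>" using neg p1 unfolding D_def by linarith
  have BV: "B \<subseteq> V" unfolding B_def by auto
  have finB: "finite B" using fin BV finite_subset by auto
  have YB: "\<And>x. x \<in> B \<Longrightarrow> sum \<pi>2 (Y x) \<ge> sqrt \<gamma>" unfolding B_def Ddef by auto
  define A where "A y = {x\<in>B. y \<in> Y x}" for y
  have "(\<Sum>x\<in>B. \<pi>1 x * sum \<pi>2 (Y x)) = (\<Sum>x\<in>B. \<Sum>y\<in>V. if y \<in> Y x then \<pi>1 x * \<pi>2 y else 0)"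
  proof (rule sum.cong)
    fix x assume "x \<in> B"
    have "\<pi>1 x * sum \<pi>2 (Y x) = (\<Sum>y\<in>Y x. \<pi>1 x * \<pi>2 y)" by (simp add: sum_distrib_left)
    also have "\<dots> = (\<Sum>y\<in>V. if y \<in> Y x then \<pi>1 x * \<pi>2 y else 0)"
      unfolding Y_def using fin by (simp add: sum.inter_filter)
    finally show "\<pi>1 x * sum \<pi>2 (Y x) = (\<Sum>y\<in>V. if y \<in> Y x then \<pi>1 x * \<pi>2 y else 0)" .
  qed simp
  also have "\<dots> = (\<Sum>y\<in>V. \<Sum>x\<in>B. if y \<in> Y x then \<pi>1 x * \<pi>2 y else 0)" by (rule sum.swap)
  also have "\<dots> = (\<Sum>y\<in>V. \<pi>2 y * sum \<pi>1 (A y))"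
  proof (rule sum.cong)
    fix y assume "y \<in> V"
    have "\<pi>2 y * sum \<pi>1 (A y) = (\<Sum>x\<in>A y. \<pi>1 x * \<pi>2 y)" by (simp add: sum_distrib_left mult.commute)
    also have "\<dots> = (\<Sum>x\<in>B. if y \<in> Y x then \<pi>1 x * \<pi>2 y else 0)"
      unfolding A_def using finB by (simp add: sum.inter_filter)
    finally show "(\<Sum>x\<in>B. if y \<in> Y x then \<pi>1 x * \<pi>2 y else 0) = \<pi>2 y * sum \<pi>1 (A y)" by simp
  qed simp
  finally have eq: "(\<Sum>x\<in>B. \<pi>1 x * sum \<pi>2 (Y x)) = (\<Sum>y\<in>V. \<pi>2 y * sum \<pi>1 (A y))" .
  have "\<gamma> = sqrt \<gamma> * sqrt \<gamma>" using assms(3) by simp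
  also have "\<dots> \<le> sum \<pi>1 B * sqrt \<gamma>" using PB assms(3) by (intro mult_right_mono) auto
  also have "\<dots> = (\<Sum>x\<in>B. \<pi>1 x * sqrt \<gamma>)" by (simp add: sum_distrib_right)
  also have "\<dots> \<le> (\<Sum>x\<in>B. \<pi>1 x * sum \<pi>2 (Y x))"
    by (rule sum_mono) (use YB p1 BV in \<open>auto intro: mult_left_mono\<close>)
  finally have big: "(\<Sum>y\<in>V. \<pi>2 y * sum \<pi>1 (A y)) \<ge> \<gamma>" using eq by linarith
  have "\<exists>y\<in>V. \<pi>2 y > 0 \<and> sum \<pi>1 (A y) \<ge> \<gamma>"
  proof (rule ccontr)
    assume nn: "\<not> ?thesis"
    have "\<exists>y\<in>V. \<pi>2 y > 0"
    proof (rule ccontr)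
      assume "\<not> ?thesis"
      hence "\<forall>y\<in>V. \<pi>2 y = 0" using p2 by force
      thus False using p2 by simp
    qed
    then obtain y0 where y0: "y0 \<in> V" "\<pi>2 y0 > 0" by auto
    have "(\<Sum>y\<in>V. \<pi>2 y * sum \<pi>1 (A y)) < (\<Sum>y\<in>V. \<pi>2 y * \<gamma>)"
    proof (rule sum_strict_mono_ex1[OF fin])
      show "\<forall>x\<in>V. \<pi>2 x * sum \<pi>1 (A x) \<le> \<pi>2 x * \<gamma>"
      proof
        fix x assume "x \<in> V"
        show "\<pi>2 x * sum \<pi>1 (A x) \<le> \<pi>2 x * \<gamma>"
        proof (cases "\<pi>2 x > 0")
          case True thus ?thesis using nn \<open>x \<in> V\<close> by auto
        next
          case False thus ?thesis using p2 \<open>x \<in> V\<close> by force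
        qed
      qed
      show "\<exists>a\<in>V. \<pi>2 a * sum \<pi>1 (A a) < \<pi>2 a * \<gamma>" using y0 nn by (intro bexI[of _ y0]) auto
    qed
    also have "\<dots> = \<gamma>" using p2 by (simp add: sum_distrib_right[symmetric])
    finally show False using big by simp
  qed
  then obtain y where y: "y \<in> V" "\<pi>2 y > 0" "sum \<pi>1 (A y) \<ge> \<gamma>" by auto
  have ysupp: "y \<in> supp V \<pi>2" using y by (simp add: supp_def)
  hence SyV: "S y \<subseteq> V" and Syt: "real (card (S y)) \<ge> t" using assms(9) by auto
  have finS: "finite (S y)" using SyV fin finite_subset by auto
  have AV: "A y \<subseteq> V" using BV unfolding A_def by auto
  have finA: "finite (A y)" using AV fin finite_subset by auto
  have Ane: "A y \<noteq> {}" using y(3) assms(3) by auto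
  have "sum \<pi>1 (A y) < (\<Sum>x\<in>A y. \<gamma> / t)"
    by (rule sum_strict_mono[OF finA Ane]) (use AV assms(7) in auto)
  hence "\<gamma> < real (card (A y)) * (\<gamma> / t)" using y(3) by simp
  hence "\<gamma> * t < real (card (A y)) * \<gamma>" using tpos by (simp add: field_simps)
  hence Acard: "real (card (A y)) \<ge> t" using assms(3) by (simp add: mult.commute)
  have sp: "real (edges_between E (A y) (S y)) \<le> (1 - c) * real (card (A y)) * real (card (S y))"
    using assms(2) AV SyV Acard Syt unfolding sparse_def by blast
  have "{(a, b) \<in> A y \<times> S y. E a b} = Sigma (A y) (\<lambda>a. S y \<inter> nbhd V E a)"
    using SyV unfolding nbhd_def by auto
  hence "edges_between E (A y) (S y) = (\<Sum>a\<in>A y. card (S y \<inter> nbhd V E a))"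
    unfolding edges_between_def using finA finS by (simp add: card_SigmaI)
  hence "real (edges_between E (A y) (S y)) = (\<Sum>a\<in>A y. real (card (S y \<inter> nbhd V E a)))"
    by simp
  also have "\<dots> > (\<Sum>a\<in>A y. (1 - c) * real (card (S y)))"
  proof (rule sum_strict_mono[OF finA Ane])
    fix x assume "x \<in> A y"
    hence "y \<in> Y x" unfolding A_def by auto
    hence lt: "real (card (S y - nbhd V E x)) < c * real (card (S y))" unfolding Y_def by auto
    have "card (S y) = card (S y \<inter> nbhd V E x) + card (S y - nbhd V E x)"
      using finS by (rule card_Int_Diff)
    hence "real (card (S y)) = real (card (S y \<inter> nbhd V E x)) + real (card (S y - nbhd V E x))"
      by (metis of_nat_add)
    thus "(1 - c) * real (card (S y)) < real (card (S y \<inter> nbhd V E x))" using lt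
      by (simp add: algebra_simps)
  qed
  also have "(\<Sum>a\<in>A y. (1 - c) * real (card (S y))) = (1 - c) * real (card (A y)) * real (card (S y))"
    by simp
  finally show False using sp by simp
qed

end
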